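(* Let $G$ be a simple graph with vertices $x,y,z\in V(G)$ such that $\{x,y\},\{y,z\}\in E(G)$, $\{x,z\}\notin E(G)$, $\deg_G(y)=2$ and $\deg_G(z)=1$. If $A$ is an independent set of $G$ such that $N_G(A)$ is a vertex cover of $G$, then $A\cap\{x,y,z\}\neq\emptyset$.
   Context: $N_G(A)$ denotes the set of vertices of $G$ adjacent to at least one vertex of $A$. A vertex cover is a set of vertices meeting every edge. *)

theory Defs
  imports Main
begin

definition simple_graph :: "'a set \<Rightarrow> 'a set set \<Rightarrow> bool" where
  "simple_graph V E \<longleftrightarrow> finite V \<and> (\<forall>e\<in>E. e \<subseteq> V \<and> card e = 2)"

definition degree :: "'a set set \<Rightarrow> 'a \<Rightarrow> nat" where
  "degree E v = card {e\<in>E. v \<in> e}"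

definition independent_set :: "'a set \<Rightarrow> 'a set set \<Rightarrow> 'a set \<Rightarrow> bool" where
  "independent_set V E A \<longleftrightarrow> A \<subseteq> V \<and> (\<forall>u\<in>A. \<forall>v\<in>A. {u, v} \<notin> E)"

definition nbhd :: "'a set \<Rightarrow> 'a set set \<Rightarrow> 'a set \<Rightarrow> 'a set" where
  "nbhd V E A = {v\<in>V. \<exists>a\<in>A. {a, v} \<in> E}"

definition vertex_cover :: "'a set \<Rightarrow> 'a set set \<Rightarrow> 'a set \<Rightarrow> bool" where
  "vertex_cover V E C \<longleftrightarrow> C \<subseteq> V \<and> (\<forall>e\<in>E. e \<inter> C \<noteq> {})"

end

theory Submission
  imports Defs
begin

theorem lemma3p4:
  fixes V :: "'a set" and E :: "'a set set" and x y z :: 'a and A :: "'a set"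
  assumes "simple_graph V E"
    and "x \<in> V" and "y \<in> V" and "z \<in> V" and "x \<noteq> z"
    and "{x, y} \<in> E" and "{y, z} \<in> E" and "{x, z} \<notin> E"
    and "degree E y = 2" and "degree E z = 1"
    and "independent_set V E A"
    and "vertex_cover V E (nbhd V E A)"
  shows "A \<inter> {x, y, z} \<noteq> {}"
proof
  assume dis: "A \<inter> {x, y, z} = {}"
  have c2: "\<And>e. e \<in> E \<Longrightarrow> card e = 2" using assms(1) unfolding simple_graph_def by blast
  have xy: "x \<noteq> y" using c2[OF assms(6)] by (cases "x = y") auto
  have yz: "y \<noteq> z" using c2[OF assms(7)] by (cases "y = z") auto
  have fy: "finite {e\<in>E. y \<in> e}" using assms(9) unfolding degree_def
    by (metis card.infinite zero_neq_numeral)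
  have fz: "finite {e\<in>E. z \<in> e}" using assms(10) unfolding degree_def
    by (metis card.infinite zero_neq_one)
  have sy: "{{x,y},{y,z}} \<subseteq> {e\<in>E. y \<in> e}" using assms(6,7) by auto
  have cy: "card {{x,y},{y,z}} = 2" using xy yz assms(5)
    by (auto simp: doubleton_eq_iff)
  have Ey: "{e\<in>E. y \<in> e} = {{x,y},{y,z}}"
    using card_subset_eq[OF fy sy] cy assms(9) unfolding degree_def by simp
  have sz: "{{y,z}} \<subseteq> {e\<in>E. z \<in> e}" using assms(7) by auto
  have Ez: "{e\<in>E. z \<in> e} = {{y,z}}"
    using card_subset_eq[OF fz sz] assms(10) unfolding degree_def by simp
  have "{y,z} \<inter> nbhd V E A \<noteq> {}" using assms(7,12) unfolding vertex_cover_def by blast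
  then obtain a where aA: "a \<in> A" and disj: "{a,y} \<in> E \<or> {a,z} \<in> E"
    unfolding nbhd_def by blast
  from disj show False
  proof
    assume "{a,y} \<in> E"
    then have "{a,y} \<in> {e\<in>E. y \<in> e}" by simp
    then have "{a,y} = {x,y} \<or> {a,y} = {y,z}" using Ey by simp
    moreover have "a \<noteq> y" using aA dis by auto
    ultimately have "a = x \<or> a = z" by (auto simp: doubleton_eq_iff)
    then show False using aA dis by auto
  next
    assume "{a,z} \<in> E"
    then have "{a,z} \<in> {e\<in>E. z \<in> e}" by simp
    then have "{a,z} = {y,z}" using Ez by simp
    moreover have "a \<noteq> z" using aA dis by auto
    ultimately have "a = y" by (auto simp: doubleton_eq_iff)
    then show False using aA dis by auto
  qed
qed

end
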